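(* Let $A=(a_n)_{n\ge1}$ and $B=(b_n)_{n\ge1}$ be decreasing sequences of positive real numbers converging to $0$, such that the difference sequences $(a_n-a_{n+1})_{n\ge1}$ and $(b_n-b_{n+1})_{n\ge1}$ are monotonically nonincreasing. If $a_n\le b_n$ for all $n$, then $\overline{\dim}_BA\le\overline{\dim}_BB$ and $\underline{\dim}_BA\le\underline{\dim}_BB$ (the sequences being identified with the sets of their terms).
   Context: For a bounded set $S\subset\mathbb{R}$ and $\varepsilon>0$, $S_\varepsilon=\{y: \mathrm{dist}(y,S)<\varepsilon\}$ and $|S_\varepsilon|$ is its Lebesgue measure. $\mathcal M^{*s}(S)=\limsup_{\varepsilon\to0}|S_\varepsilon|/\varepsilon^{1-s}$, $\mathcal M_*^{s}(S)=\liminf_{\varepsilon\to0}|S_\varepsilon|/\varepsilon^{1-s}$; $\overline{\dim}_BS=\inf\{s\ge0:\mathcal M^{*s}(S)=0\}$ and $\underline{\dim}_BS=\inf\{s\ge0:\mathcal M_*^{s}(S)=0\}$. *)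

theory Defs
  imports "HOL-Analysis.Analysis"
begin

definition eps_nbhd :: "real set \<Rightarrow> real \<Rightarrow> real set" where
  "eps_nbhd S e = {y. infdist y S < e}"

definition upper_mink :: "real \<Rightarrow> real set \<Rightarrow> ereal" where
  "upper_mink s S = Limsup (at_right 0)
      (\<lambda>e. ereal (measure lebesgue (eps_nbhd S e) / e powr (1 - s)))"

definition lower_mink :: "real \<Rightarrow> real set \<Rightarrow> ereal" where
  "lower_mink s S = Liminf (at_right 0)
      (\<lambda>e. ereal (measure lebesgue (eps_nbhd S e) / e powr (1 - s)))"

definition upper_box_dim :: "real set \<Rightarrow> real" where
  "upper_box_dim S = Inf {s. s \<ge> 0 \<and> upper_mink s S = 0}"

definition lower_box_dim :: "real set \<Rightarrow> real" where
  "lower_box_dim S = Inf {s. s \<ge> 0 \<and> lower_mink s S = 0}"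

end

theory Submission
  imports Defs
begin

lemma eps_open: "open (eps_nbhd S e)"
  unfolding eps_nbhd_def by (intro open_Collect_less continuous_intros)

lemma eps_mem: "S \<noteq> {} \<Longrightarrow> y \<in> eps_nbhd S e \<longleftrightarrow> (\<exists>x\<in>S. dist y x < e)"
  unfolding eps_nbhd_def by (simp add: infdist_notempty cINF_less_iff)

lemma meas_Ioo: "l \<le> u \<Longrightarrow> measure lebesgue {l<..<u::real} = u - l"
  by simp

lemma ev: "(\<And>e. e > 0 \<Longrightarrow> P e) \<Longrightarrow> eventually P (at_right (0::real))"
  unfolding eventually_at_right_field by (intro exI[of _ 1]) auto

lemma dec_mono:
  fixes x :: "nat \<Rightarrow> real"
  assumes "\<And>n. n \<ge> 1 \<Longrightarrow> x (Suc n) < x n" "1 \<le> m" "m \<le> n"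
  shows "x n \<le> x m"
  using assms(3)
proof (induction n rule: dec_induct)
  case (step k)
  then show ?case using assms(1)[of k] assms(2) by linarith
qed simp

lemma nbhd_sub:
  fixes S :: "real set"
  assumes "S \<noteq> {}" "S \<subseteq> {0..c}"
  shows "eps_nbhd S e \<subseteq> {-e<..<c+e}"
proof
  fix y assume "y \<in> eps_nbhd S e"
  then obtain z where "z \<in> S" "dist y z < e" using eps_mem[OF assms(1)] by blast
  moreover have "0 \<le> z" "z \<le> c" using \<open>z \<in> S\<close> assms(2) by auto
  ultimately show "y \<in> {-e<..<c+e}" by (auto simp: dist_real_def)
qed

lemma nbhd_lmeas:
  fixes S :: "real set"
  assumes "S \<noteq> {}" "S \<subseteq> {0..c}"
  shows "eps_nbhd S e \<in> lmeasurable"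
  by (rule lmeasurable_open[OF bounded_subset[OF bounded_Ioo nbhd_sub[OF assms]] eps_open])

lemma upper_est:
  fixes x :: "nat \<Rightarrow> real"
  assumes pos: "\<And>n. n \<ge> 1 \<Longrightarrow> x n > 0"
    and dec: "\<And>n. n \<ge> 1 \<Longrightarrow> x (Suc n) < x n"
    and K: "K \<ge> 1" and e: "e > 0"
  shows "measure lebesgue (eps_nbhd {x n | n. n \<ge> 1} e) \<le> 2*e*K + x K"
proof -
  let ?S = "{x n | n. n \<ge> 1}"
  have ne: "?S \<noteq> {}" by auto
  have "\<And>n. n \<ge> 1 \<Longrightarrow> 0 \<le> x n \<and> x n \<le> x 1"
    using pos dec_mono[of x, OF dec, of 1] by (meson less_imp_le order_refl)
  then have sub: "?S \<subseteq> {0..x 1}" by auto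
  define U1 where "U1 = (\<Union>n\<in>{1..<K}. {x n - e<..<x n + e})"
  define U2 where "U2 = {-e<..<x K + e}"
  have "eps_nbhd ?S e \<subseteq> U1 \<union> U2"
  proof
    fix y assume "y \<in> eps_nbhd ?S e"
    then obtain n where n: "n \<ge> 1" "dist y (x n) < e" using eps_mem[OF ne] by blast
    show "y \<in> U1 \<union> U2"
    proof (cases "n < K")
      case True
      have "y \<in> U1" unfolding U1_def using n True
        by (intro UN_I[of n]) (auto simp: dist_real_def abs_less_iff)
      then show ?thesis by simp
    next
      case False
      then have "x n \<le> x K" using dec_mono[of x, OF dec K] by simp
      then show ?thesis using n pos[OF n(1)] by (auto simp: U2_def dist_real_def)
    qed
  qed
  moreover have "U1 \<union> U2 \<in> lmeasurable"
    by (intro lmeasurable_open) (auto simp: U1_def U2_def intro!: open_Un open_UN)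
  ultimately have "measure lebesgue (eps_nbhd ?S e) \<le> measure lebesgue (U1 \<union> U2)"
    using nbhd_lmeas[OF ne sub] by (intro measure_mono_fmeasurable) auto
  also have "\<dots> \<le> measure lebesgue U1 + measure lebesgue U2"
    by (intro measure_Un_le) (auto simp: U1_def U2_def)
  also have "measure lebesgue U1 \<le> (\<Sum>n\<in>{1..<K}. measure lebesgue {x n - e<..<x n + e})"
    unfolding U1_def by (intro measure_UNION_le) auto
  also have "\<dots> = (\<Sum>n\<in>{1..<K}. 2*e)" using e by (intro sum.cong) auto
  also have "\<dots> = 2*e*(K-1)" using K by (simp add: of_nat_diff)
  also have "measure lebesgue U2 = x K + 2*e" unfolding U2_def using e pos[OF K] by simp
  finally show ?thesis using K by (simp add: of_nat_diff algebra_simps)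
qed

lemma lower_est:
  fixes x :: "nat \<Rightarrow> real"
  assumes pos: "\<And>n. n \<ge> 1 \<Longrightarrow> x n > 0"
    and dec: "\<And>n. n \<ge> 1 \<Longrightarrow> x (Suc n) < x n"
    and lim: "x \<longlonglongrightarrow> 0"
    and gap: "\<And>n. n \<ge> 1 \<Longrightarrow> x (Suc n) - x (Suc (Suc n)) \<le> x n - x (Suc n)"
    and e: "e > 0"
  shows "\<exists>K\<ge>1. 2*e*K \<le> measure lebesgue (eps_nbhd {x n | n. n \<ge> 1} e)
               \<and> x K \<le> measure lebesgue (eps_nbhd {x n | n. n \<ge> 1} e)"
proof -
  let ?S = "{x n | n. n \<ge> 1}"
  have ne: "?S \<noteq> {}" by auto
  have "\<And>n. n \<ge> 1 \<Longrightarrow> 0 \<le> x n \<and> x n \<le> x 1"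
    using pos dec_mono[of x, OF dec, of 1] by (meson less_imp_le order_refl)
  then have sub: "?S \<subseteq> {0..x 1}" by auto
  have lm: "eps_nbhd ?S e \<in> lmeasurable" by (rule nbhd_lmeas[OF ne sub])
  have "(\<lambda>n. x n - x (Suc n)) \<longlonglongrightarrow> 0 - 0"
    by (intro tendsto_diff lim LIMSEQ_Suc)
  then have "eventually (\<lambda>n. x n - x (Suc n) < 2*e) sequentially"
    using e by (intro order_tendstoD) auto
  then obtain N where N: "\<And>n. n \<ge> N \<Longrightarrow> x n - x (Suc n) < 2*e"
    by (auto simp: eventually_sequentially)
  define P where "P = (\<lambda>n. 1 \<le> n \<and> x n - x (Suc n) < 2*e)"
  have PN: "P (max N 1)" unfolding P_def using N by auto
  define K where "K = (LEAST n. P n)"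
  have PK: "P K" unfolding K_def by (rule LeastI[of P, OF PN])
  then have K1: "K \<ge> 1" by (simp add: P_def)
  have small: "x n - x (Suc n) \<ge> 2*e" if "n < K" "1 \<le> n" for n
  proof -
    have "n < (LEAST n. P n)" using that unfolding K_def by simp
    then have "\<not> P n" by (rule not_less_Least)
    then show ?thesis using that unfolding P_def by auto
  qed
  have gapmono: "K \<le> n \<Longrightarrow> x n - x (Suc n) \<le> x K - x (Suc K)" for n
  proof (induction n rule: dec_induct)
    case (step k)
    then show ?case using gap[of k] K1 by linarith
  qed simp
  have large: "K \<le> n \<Longrightarrow> x n - x (Suc n) < 2*e" for n
    using gapmono[of n] PK by (simp add: P_def)
  define I where "I = (\<lambda>n. {x n - e<..<x n + e})"
  have disj: "pairwise (\<lambda>i j. disjnt (I i) (I j)) {1..K}"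
  proof (rule pairwiseI)
    fix i j assume ij: "i \<in> {1..K}" "j \<in> {1..K}" "i \<noteq> j"
    have key: "x m - x n \<ge> 2*e" if mn: "m \<in> {1..K}" "n \<in> {1..K}" "m < n" for m n
    proof -
      obtain p where p: "n = Suc p" using mn(3) by (metis less_nat_zero_code not0_implies_Suc)
      have "x p \<le> x m" using dec_mono[of x, OF dec, of m p] mn p by auto
      moreover have "x p - x n \<ge> 2*e" using small[of p] mn p by auto
      ultimately show ?thesis by linarith
    qed
    show "disjnt (I i) (I j)"
    proof (cases "i < j")
      case True then show ?thesis using key[of i j] ij by (auto simp: disjnt_def I_def)
    next
      case False then have "j < i" using ij by auto
      then show ?thesis using key[of j i] ij by (auto simp: disjnt_def I_def)
    qed
  qed
  have U: "(\<Union>n\<in>{1..K}. I n) \<subseteq> eps_nbhd ?S e"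
  proof
    fix y assume "y \<in> (\<Union>n\<in>{1..K}. I n)"
    then obtain n where "n \<in> {1..K}" "y \<in> I n" by auto
    then show "y \<in> eps_nbhd ?S e" unfolding eps_mem[OF ne]
      by (intro bexI[of _ "x n"]) (auto simp: I_def dist_real_def abs_less_iff)
  qed
  have "measure lebesgue (\<Union>n\<in>{1..K}. I n) = (\<Sum>n\<in>{1..K}. measure lebesgue (I n))"
    by (intro measure_UNION' disj) (auto simp: I_def)
  also have "\<dots> = (\<Sum>n\<in>{1..K}. 2*e)" using e by (intro sum.cong) (auto simp: I_def)
  also have "\<dots> = 2*e*K" by simp
  finally have eqU: "measure lebesgue (\<Union>n\<in>{1..K}. I n) = 2*e*K" .
  have "measure lebesgue (\<Union>n\<in>{1..K}. I n) \<le> measure lebesgue (eps_nbhd ?S e)"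
    using U lm by (intro measure_mono_fmeasurable) (auto simp: I_def)
  then have m1: "2*e*K \<le> measure lebesgue (eps_nbhd ?S e)" using eqU by simp
  have V: "{0<..<x K} \<subseteq> eps_nbhd ?S e"
  proof
    fix y assume y: "y \<in> {0<..<x K}"
    then have "y > 0" by simp
    then have "eventually (\<lambda>n. x n < y) sequentially"
      using lim by (intro order_tendstoD) auto
    then obtain M where M: "\<And>n. n \<ge> M \<Longrightarrow> x n < y" by (auto simp: eventually_sequentially)
    define Q where "Q = (\<lambda>n. K \<le> n \<and> x n < y)"
    have "Q (max M K)" using M by (auto simp: Q_def)
    define n0 where "n0 = (LEAST n. Q n)"
    have Qn0: "Q n0" unfolding n0_def by (rule LeastI[of Q]) fact
    have "n0 \<noteq> K" using Qn0 y by (auto simp: Q_def)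
    then obtain p where p: "n0 = Suc p" "K \<le> p" using Qn0 unfolding Q_def
    proof -
      have "K < n0" using Qn0 \<open>n0 \<noteq> K\<close> by (simp add: Q_def)
      then show ?thesis using that by (metis Suc_le_D Suc_le_eq Suc_le_mono)
    qed
    have "\<not> Q p" using not_less_Least[of p Q] p unfolding n0_def[symmetric] by simp
    then have "x p \<ge> y" using p by (auto simp: Q_def)
    moreover have "x p - x n0 < 2*e" using large[OF p(2)] p by simp
    moreover have "x n0 < y" using Qn0 by (simp add: Q_def)
    ultimately have "dist y (x n0) < e \<or> dist y (x p) < e" by (auto simp: dist_real_def)
    moreover have "n0 \<ge> 1" "p \<ge> 1" using p K1 by auto
    ultimately show "y \<in> eps_nbhd ?S e" unfolding eps_mem[OF ne] by blast
  qed
  have "x K = measure lebesgue {0<..<x K}" using pos[OF K1] by simp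
  also have "\<dots> \<le> measure lebesgue (eps_nbhd ?S e)"
    using V lm by (intro measure_mono_fmeasurable) auto
  finally show ?thesis using m1 K1 by blast
qed

lemma mink_2:
  fixes S :: "real set"
  assumes ne: "S \<noteq> {}" and sub: "S \<subseteq> {0..c}"
  shows "upper_mink 2 S = 0 \<and> lower_mink 2 S = 0"
proof -
  define f where "f = (\<lambda>e. measure lebesgue (eps_nbhd S e) / e powr (1 - 2))"
  have c: "c \<ge> 0" using ne sub by auto
  have "(f \<longlongrightarrow> 0) (at_right 0)"
  proof (rule tendsto_sandwich[of "\<lambda>_. 0" f _ "\<lambda>e. (c + 2*e)*e"])
    show "eventually (\<lambda>e. 0 \<le> f e) (at_right 0)"
      by (rule ev) (simp add: f_def)
    show "eventually (\<lambda>e. f e \<le> (c + 2*e)*e) (at_right 0)"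
    proof (rule ev)
      fix e :: real assume e: "e > 0"
      have "measure lebesgue (eps_nbhd S e) \<le> measure lebesgue {-e<..<c+e}"
        using nbhd_sub[OF ne sub, of e] nbhd_lmeas[OF ne sub, of e]
        by (intro measure_mono_fmeasurable) auto
      also have "\<dots> = c + 2*e" using e c by simp
      finally have "measure lebesgue (eps_nbhd S e) \<le> c + 2*e" .
      moreover have "e powr (1 - 2) = inverse e" using e by (simp add: powr_minus)
      ultimately show "f e \<le> (c + 2*e)*e" unfolding f_def using e
        by (simp add: divide_inverse mult_right_mono)
    qed
    have "((\<lambda>e. (c + 2*e)*e) \<longlongrightarrow> (c + 2*0)*0) (at_right (0::real))"
      by (intro tendsto_intros)
    then show "((\<lambda>e. (c + 2*e)*e) \<longlongrightarrow> 0) (at_right 0)" by simp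
  qed simp
  then have "((\<lambda>e. ereal (f e)) \<longlongrightarrow> ereal 0) (at_right 0)" by (rule tendsto_ereal)
  then have L: "((\<lambda>e. ereal (f e)) \<longlongrightarrow> 0) (at_right 0)" by (simp add: zero_ereal_def)
  have "Limsup (at_right 0) (\<lambda>e. ereal (f e)) = 0"
    by (rule lim_imp_Limsup[OF trivial_limit_at_right_real L])
  moreover have "Liminf (at_right 0) (\<lambda>e. ereal (f e)) = 0"
    by (rule lim_imp_Liminf[OF trivial_limit_at_right_real L])
  ultimately show ?thesis unfolding upper_mink_def lower_mink_def f_def by simp
qed

lemma mink_mono:
  fixes f g :: "real \<Rightarrow> real"
  assumes "\<And>e. e > 0 \<Longrightarrow> 0 \<le> f e \<and> f e \<le> 2 * g e"
  shows "Limsup (at_right 0) (\<lambda>e. ereal (g e)) = 0 \<Longrightarrow> Limsup (at_right 0) (\<lambda>e. ereal (f e)) = 0"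
    and "Liminf (at_right 0) (\<lambda>e. ereal (g e)) = 0 \<Longrightarrow> Liminf (at_right 0) (\<lambda>e. ereal (f e)) = 0"
proof -
  have nb: "at_right (0::real) \<noteq> bot" by simp
  have le: "eventually (\<lambda>e. ereal (f e) \<le> ereal 2 * ereal (g e)) (at_right 0)"
    by (rule ev) (use assms in auto)
  have ge: "eventually (\<lambda>e. 0 \<le> ereal (f e)) (at_right 0)"
    by (rule ev) (use assms in auto)
  have lo: "0 \<le> Liminf (at_right 0) (\<lambda>e. ereal (f e))"
    using ge by (intro Liminf_bounded) auto
  have lu: "Liminf (at_right 0) (\<lambda>e. ereal (f e)) \<le> Limsup (at_right 0) (\<lambda>e. ereal (f e))"
    using nb by (rule Liminf_le_Limsup)
  show "Limsup (at_right 0) (\<lambda>e. ereal (g e)) = 0 \<Longrightarrow> Limsup (at_right 0) (\<lambda>e. ereal (f e)) = 0"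
  proof -
    assume h: "Limsup (at_right 0) (\<lambda>e. ereal (g e)) = 0"
    have "Limsup (at_right 0) (\<lambda>e. ereal (f e)) \<le> Limsup (at_right 0) (\<lambda>e. ereal 2 * ereal (g e))"
      using le by (rule Limsup_mono)
    also have "\<dots> = ereal 2 * Limsup (at_right 0) (\<lambda>e. ereal (g e))"
      using nb by (intro Limsup_ereal_mult_left) auto
    finally show ?thesis using h lo lu by simp
  qed
  show "Liminf (at_right 0) (\<lambda>e. ereal (g e)) = 0 \<Longrightarrow> Liminf (at_right 0) (\<lambda>e. ereal (f e)) = 0"
  proof -
    assume h: "Liminf (at_right 0) (\<lambda>e. ereal (g e)) = 0"
    have "Liminf (at_right 0) (\<lambda>e. ereal (f e)) \<le> Liminf (at_right 0) (\<lambda>e. ereal 2 * ereal (g e))"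
      using le by (rule Liminf_mono)
    also have "\<dots> = ereal 2 * Liminf (at_right 0) (\<lambda>e. ereal (g e))"
      using nb by (intro Liminf_ereal_mult_left) auto
    finally show ?thesis using h lo by simp
  qed
qed

theorem lemma2:
  fixes a b :: "nat \<Rightarrow> real"
  assumes a_pos: "\<And>n. n \<ge> 1 \<Longrightarrow> a n > 0"
    and b_pos: "\<And>n. n \<ge> 1 \<Longrightarrow> b n > 0"
    and a_dec: "\<And>n. n \<ge> 1 \<Longrightarrow> a (Suc n) < a n"
    and b_dec: "\<And>n. n \<ge> 1 \<Longrightarrow> b (Suc n) < b n"
    and a_lim: "a \<longlonglongrightarrow> 0"
    and b_lim: "b \<longlonglongrightarrow> 0"
    and a_diff: "\<And>n. n \<ge> 1 \<Longrightarrow> a (Suc n) - a (Suc (Suc n)) \<le> a n - a (Suc n)"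
    and b_diff: "\<And>n. n \<ge> 1 \<Longrightarrow> b (Suc n) - b (Suc (Suc n)) \<le> b n - b (Suc n)"
    and le: "\<And>n. n \<ge> 1 \<Longrightarrow> a n \<le> b n"
  shows "upper_box_dim {a n | n. n \<ge> 1} \<le> upper_box_dim {b n | n. n \<ge> 1}
       \<and> lower_box_dim {a n | n. n \<ge> 1} \<le> lower_box_dim {b n | n. n \<ge> 1}"
proof -
  let ?A = "{a n | n. n \<ge> 1}" and ?B = "{b n | n. n \<ge> 1}"
  define fA where "fA = (\<lambda>s e. measure lebesgue (eps_nbhd ?A e) / e powr (1 - s))"
  define fB where "fB = (\<lambda>s e. measure lebesgue (eps_nbhd ?B e) / e powr (1 - s))"
  have meas: "measure lebesgue (eps_nbhd ?A e) \<le> 2 * measure lebesgue (eps_nbhd ?B e)"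
    if e: "e > 0" for e
  proof -
    obtain K where K: "K \<ge> 1" "2*e*K \<le> measure lebesgue (eps_nbhd ?B e)"
      "b K \<le> measure lebesgue (eps_nbhd ?B e)"
      using lower_est[of b, OF b_pos b_dec b_lim b_diff e] by blast
    have "measure lebesgue (eps_nbhd ?A e) \<le> 2*e*K + a K"
      by (rule upper_est[of a, OF a_pos a_dec K(1) e])
    then show ?thesis using K le[OF K(1)] by linarith
  qed
  have cmp: "0 \<le> fA s e \<and> fA s e \<le> 2 * fB s e" if "e > 0" for s e
  proof -
    have p: "e powr (1 - s) > 0" using that by simp
    show ?thesis unfolding fA_def fB_def using meas[OF that] p
      by (simp add: divide_right_mono)
  qed
  have su: "upper_mink s ?B = 0 \<Longrightarrow> upper_mink s ?A = 0" for s
    unfolding upper_mink_def using mink_mono(1)[of "fA s" "fB s"] cmp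
    unfolding fA_def fB_def by blast
  have sl: "lower_mink s ?B = 0 \<Longrightarrow> lower_mink s ?A = 0" for s
    unfolding lower_mink_def using mink_mono(2)[of "fA s" "fB s"] cmp
    unfolding fA_def fB_def by blast
  have bsub: "?B \<subseteq> {0..b 1}"
  proof
    fix y assume "y \<in> ?B"
    then obtain n where n: "n \<ge> 1" "y = b n" by auto
    have "b n \<le> b 1" using dec_mono[of b, OF b_dec, of 1 n] n by simp
    then show "y \<in> {0..b 1}" using b_pos[OF n(1)] n by simp
  qed
  have bne: "?B \<noteq> {}" by auto
  note m2 = mink_2[OF bne bsub]
  have "Inf {s. s \<ge> 0 \<and> upper_mink s ?A = 0} \<le> Inf {s. s \<ge> 0 \<and> upper_mink s ?B = 0}"
  proof (rule cInf_superset_mono)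
    have "(2::real) \<in> {s. s \<ge> 0 \<and> upper_mink s ?B = 0}" using m2 by simp
    then show "{s. s \<ge> 0 \<and> upper_mink s ?B = 0} \<noteq> {}" by blast
  qed (use su in \<open>auto intro!: bdd_belowI[of _ 0]\<close>)
  moreover have "Inf {s. s \<ge> 0 \<and> lower_mink s ?A = 0} \<le> Inf {s. s \<ge> 0 \<and> lower_mink s ?B = 0}"
  proof (rule cInf_superset_mono)
    have "(2::real) \<in> {s. s \<ge> 0 \<and> lower_mink s ?B = 0}" using m2 by simp
    then show "{s. s \<ge> 0 \<and> lower_mink s ?B = 0} \<noteq> {}" by blast
  qed (use sl in \<open>auto intro!: bdd_belowI[of _ 0]\<close>)
  ultimately show ?thesis unfolding upper_box_dim_def lower_box_dim_def by simp
qed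

end
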